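(* Let $\eta>0$, $\alpha\in(0,1)$, $C\ge1$, and run the generalized share algorithm with the mixing rule $\hat p_{j,t}=(1-\alpha)v_{j,t}+\alpha\,w_{j,t}/Z_t$ for $t\ge2$, where $Z_t=\sum_{i=1}^dw_{i,t}$ and the nonnegative weights $w_{j,t}$ (which may depend on the past and current pre-weights) satisfy, for all $j=1,\dots,d$ and all $t\ge1$, $v_{j,t}\le w_{j,t}\le1$ and $C\,w_{j,t+1}\ge w_{j,t}$. Then for all $T\ge1$, all loss vectors $\ell_1,\dots,\ell_T\in[0,1]^d$ and all $u_1,\dots,u_T\in\mathbb R_+^d$, \[ \sum_{t=1}^T\|u_t\|_1\hat p_t^\top\ell_t-\sum_{t=1}^Tu_t^\top\ell_t\le\frac{n(u_1^T)\ln d}{\eta}+\frac{n(u_1^T)\,T\ln C}{\eta}+\frac\eta8\sum_{t=1}^T\|u_t\|_1+\frac{m(u_1^T)}{\eta}\ln\frac{\max_{t\le T}Z_t}{\alpha}+\frac{\sum_{t=2}^T\|u_t\|_1-m(u_1^T)}{\eta}\ln\frac1{1-\alpha}. \]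
   Context: Let $d\ge1$ and $\Delta_d=\{q\in[0,1]^d:\sum_{i=1}^d q_i=1\}$. The generalized share algorithm with learning rate $\eta>0$ and mixing functions $\psi_t:[0,1]^{td}\to\Delta_d$ ($t\ge2$) works as follows: $\hat p_1=v_1=(1/d,\dots,1/d)$. At each round $t=1,2,\dots$ it predicts $\hat p_t=(\hat p_{1,t},\dots,\hat p_{d,t})\in\Delta_d$, observes a loss vector $\ell_t=(\ell_{1,t},\dots,\ell_{d,t})\in[0,1]^d$ (arbitrary), and suffers loss $\hat p_t^\top\ell_t$. It then forms the pre-weights $v_{j,t+1}=\hat p_{j,t}e^{-\eta\ell_{j,t}}/\sum_{i=1}^d\hat p_{i,t}e^{-\eta\ell_{i,t}}$ for $j=1,\dots,d$, sets $v_{t+1}=(v_{1,t+1},\dots,v_{d,t+1})$, and defines $\hat p_{t+1}=\psi_{t+1}(V_{t+1})$ where $V_{t+1}=[v_{i,s}]_{1\le i\le d,1\le s\le t+1}$ is the $d\times(t+1)$ matrix of all pre-weights so far. For $x,y\in\mathbb R_+^d$, $D_{\mathrm{TV}}(x,y)=\sum_{i:\,x_i\ge y_i}(x_i-y_i)$; for $u_1,\dots,u_T\in\mathbb R_+^d$ (with $u_t=(u_{1,t},\dots,u_{d,t})$), $m(u_1^T)=\sum_{t=2}^T D_{\mathrm{TV}}(u_t,u_{t-1})$ and $n(u_1^T)=\sum_{i=1}^d\max_{1\le t\le T}u_{i,t}$. *)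

theory Defs
  imports Complex_Main
begin

text \<open>Conventions: experts are indexed by j < d (0-based), rounds by t \<ge> 1.
  Vectors in R^d are functions nat \<Rightarrow> real (only coordinates j < d matter).
  A d \<times> t matrix of pre-weights is a function (s :: nat) (j :: nat) \<mapsto> v_{j,s},
  zero outside 1 \<le> s \<le> t, j < d.
  A mixing rule is psi :: nat \<Rightarrow> (nat \<Rightarrow> nat \<Rightarrow> real) \<Rightarrow> (nat \<Rightarrow> real):
  psi t V is the prediction at round t \<ge> 2 computed from the matrix V = V_t.\<close>

definition uniform_vec :: "nat \<Rightarrow> nat \<Rightarrow> real" where
  "uniform_vec d = (\<lambda>j. if j < d then 1 / real d else 0)"

definition restrict_hist :: "nat \<Rightarrow> nat \<Rightarrow> (nat \<Rightarrow> nat \<Rightarrow> real) \<Rightarrow> nat \<Rightarrow> nat \<Rightarrow> real" where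
  "restrict_hist d t H = (\<lambda>s j. if 1 \<le> s \<and> s \<le> t \<and> j < d then H s j else 0)"

definition gs_pred :: "nat \<Rightarrow> (nat \<Rightarrow> (nat \<Rightarrow> nat \<Rightarrow> real) \<Rightarrow> nat \<Rightarrow> real)
    \<Rightarrow> (nat \<Rightarrow> nat \<Rightarrow> real) \<Rightarrow> nat \<Rightarrow> nat \<Rightarrow> real" where
  "gs_pred d psi H t = (if t = 1 then uniform_vec d else psi t (restrict_hist d t H))"

text \<open>gs_hist d eta psi l n: the pre-weights v_1, ..., v_{n+1} (as a function of s and j).\<close>
primrec gs_hist :: "nat \<Rightarrow> real \<Rightarrow> (nat \<Rightarrow> (nat \<Rightarrow> nat \<Rightarrow> real) \<Rightarrow> nat \<Rightarrow> real)
    \<Rightarrow> (nat \<Rightarrow> nat \<Rightarrow> real) \<Rightarrow> nat \<Rightarrow> nat \<Rightarrow> nat \<Rightarrow> real" where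
  "gs_hist d eta psi l 0 = (\<lambda>s j. if s = 1 then uniform_vec d j else 0)"
| "gs_hist d eta psi l (Suc n) =
     (let H = gs_hist d eta psi l n;
          p = gs_pred d psi H (Suc n);
          Zv = (\<Sum>i<d. p i * exp (- eta * l (Suc n) i))
      in H(Suc (Suc n) := (\<lambda>j. if j < d then p j * exp (- eta * l (Suc n) j) / Zv else 0)))"

definition gs_v :: "nat \<Rightarrow> real \<Rightarrow> (nat \<Rightarrow> (nat \<Rightarrow> nat \<Rightarrow> real) \<Rightarrow> nat \<Rightarrow> real)
    \<Rightarrow> (nat \<Rightarrow> nat \<Rightarrow> real) \<Rightarrow> nat \<Rightarrow> nat \<Rightarrow> real" where
  "gs_v d eta psi l t = gs_hist d eta psi l (t - 1) t"

definition gs_V :: "nat \<Rightarrow> real \<Rightarrow> (nat \<Rightarrow> (nat \<Rightarrow> nat \<Rightarrow> real) \<Rightarrow> nat \<Rightarrow> real)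
    \<Rightarrow> (nat \<Rightarrow> nat \<Rightarrow> real) \<Rightarrow> nat \<Rightarrow> nat \<Rightarrow> nat \<Rightarrow> real" where
  "gs_V d eta psi l t = restrict_hist d t (gs_hist d eta psi l (t - 1))"

definition gs_p :: "nat \<Rightarrow> real \<Rightarrow> (nat \<Rightarrow> (nat \<Rightarrow> nat \<Rightarrow> real) \<Rightarrow> nat \<Rightarrow> real)
    \<Rightarrow> (nat \<Rightarrow> nat \<Rightarrow> real) \<Rightarrow> nat \<Rightarrow> nat \<Rightarrow> real" where
  "gs_p d eta psi l t = gs_pred d psi (gs_hist d eta psi l (t - 1)) t"

definition share_mix :: "nat \<Rightarrow> real \<Rightarrow> (nat \<Rightarrow> (nat \<Rightarrow> nat \<Rightarrow> real) \<Rightarrow> nat \<Rightarrow> real)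
    \<Rightarrow> nat \<Rightarrow> (nat \<Rightarrow> nat \<Rightarrow> real) \<Rightarrow> nat \<Rightarrow> real" where
  "share_mix d alpha W t V = (\<lambda>j. (1 - alpha) * V t j + alpha * W t V j / (\<Sum>i<d. W t V i))"

definition norm1 :: "nat \<Rightarrow> (nat \<Rightarrow> real) \<Rightarrow> real" where
  "norm1 d x = (\<Sum>i<d. \<bar>x i\<bar>)"

definition D_TV :: "nat \<Rightarrow> (nat \<Rightarrow> real) \<Rightarrow> (nat \<Rightarrow> real) \<Rightarrow> real" where
  "D_TV d x y = (\<Sum>i\<in>{i. i < d \<and> x i \<ge> y i}. x i - y i)"

definition m_shift :: "nat \<Rightarrow> nat \<Rightarrow> (nat \<Rightarrow> nat \<Rightarrow> real) \<Rightarrow> real" where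
  "m_shift d T u = (\<Sum>t=2..T. D_TV d (u t) (u (t - 1)))"

definition n_max :: "nat \<Rightarrow> nat \<Rightarrow> (nat \<Rightarrow> nat \<Rightarrow> real) \<Rightarrow> real" where
  "n_max d T u = (\<Sum>i<d. Max ((\<lambda>t. u t i) ` {1..T}))"

end

theory Submission
  imports Defs "HOL-Probability.Hoeffding"
begin


lemma exp_convex_01:
  fixes eta x :: real
  assumes "eta > 0" "0 \<le> x" "x \<le> 1"
  shows "exp (- eta * x) \<le> 1 - x + x * exp (- eta)"
proof -
  have "exp ((1 - x) *\<^sub>R 0 + x *\<^sub>R (- eta)) \<le> (1 - x) * exp 0 + x * exp (- eta)"
    using assms by (intro convex_onD[OF convex_on_exp[of 1, simplified]]) auto
  thus ?thesis by (simp add: mult.commute)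
qed

lemma finite_hoeffding:
  fixes p ll :: "nat \<Rightarrow> real" and eta :: real
  assumes "eta > 0" and p0: "\<And>i. i < d \<Longrightarrow> 0 \<le> p i" and ps: "(\<Sum>i<d. p i) = 1"
    and l01: "\<And>i. i < d \<Longrightarrow> 0 \<le> ll i \<and> ll i \<le> 1"
  shows "ln (\<Sum>i<d. p i * exp (- eta * ll i)) \<le> - eta * (\<Sum>i<d. p i * ll i) + eta\<^sup>2 / 8"
proof -
  define q where "q = (\<Sum>i<d. p i * ll i)"
  have q0: "0 \<le> q" unfolding q_def using p0 l01 by (intro sum_nonneg) auto
  have q1: "q \<le> 1" unfolding q_def
  proof -
    have "(\<Sum>i<d. p i * ll i) \<le> (\<Sum>i<d. p i)"
      using p0 l01 by (intro sum_mono) (simp add: mult_left_le)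
    thus "(\<Sum>i<d. p i * ll i) \<le> 1" using ps by simp
  qed
  have "(\<Sum>i<d. p i * exp (- eta * ll i)) \<le> (\<Sum>i<d. p i * (1 - ll i + ll i * exp (- eta)))"
    using p0 l01 assms(1) by (intro sum_mono mult_left_mono exp_convex_01) auto
  also have "\<dots> = (\<Sum>i<d. p i) - q + q * exp (- eta)"
    unfolding q_def by (simp add: algebra_simps sum.distrib sum_subtractf sum_distrib_right sum_distrib_left)
  also have "\<dots> = exp (- eta) * (1 + (1 - q) * (exp eta - 1))"
    using ps by (simp add: algebra_simps exp_minus field_simps)
  finally have le: "(\<Sum>i<d. p i * exp (- eta * ll i)) \<le> exp (- eta) * (1 + (1 - q) * (exp eta - 1))" .
  have pos1: "0 < 1 + (1 - q) * (exp eta - 1)"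
    using q1 assms(1) by (smt (verit) mult_nonneg_nonneg one_le_exp_iff)
  have spos: "0 < (\<Sum>i<d. p i * exp (- eta * ll i))"
  proof -
    have "d > 0" using ps by (cases d) auto
    have "(\<Sum>i<d. p i * exp (- eta * ll i)) \<ge> (\<Sum>i<d. p i * exp (- eta))"
      using p0 l01 assms(1) by (intro sum_mono mult_left_mono) auto
    also have "(\<Sum>i<d. p i * exp (- eta)) = exp (- eta)" using ps by (simp add: sum_distrib_right[symmetric])
    finally show ?thesis by (smt (verit) exp_gt_zero)
  qed
  have "ln (\<Sum>i<d. p i * exp (- eta * ll i)) \<le> ln (exp (- eta) * (1 + (1 - q) * (exp eta - 1)))"
    using le spos by simp
  also have "\<dots> = - eta + ln (1 + (1 - q) * (exp eta - 1))"
    using pos1 by (simp add: ln_mult)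
  also have "ln (1 + (1 - q) * (exp eta - 1)) \<le> eta\<^sup>2/8 + eta * (1 - q)"
    using Hoeffdings_lemma_aux[of eta "1 - q"] assms(1) q1 by simp
  finally show ?thesis unfolding q_def[symmetric] by (simp add: algebra_simps)
qed

lemma step_ineq:
  fixes a b x y z L1 G :: real
  assumes "0 \<le> a" "0 \<le> b" "x \<le> L1 + y" "x \<le> G + z" "z \<le> y"
  shows "a * x - b * y \<le> min a b * L1 + max (a - b) 0 * G + (a - b) * z"
proof (cases "b \<le> a")
  case True
  have "a * x = b * x + (a - b) * x" by (simp add: algebra_simps)
  also have "\<dots> \<le> b * (L1 + y) + (a - b) * (G + z)"
    using True assms by (intro add_mono mult_left_mono) auto
  finally show ?thesis using True by (simp add: algebra_simps)
next
  case False
  have "a * x \<le> a * (L1 + y)" using assms by (intro mult_left_mono) auto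
  moreover have "(b - a) * z \<le> (b - a) * y" using False assms by (intro mult_left_mono) auto
  ultimately show ?thesis using False by (simp add: algebra_simps)
qed



lemma telescope_generic:
  fixes a lv lp psi :: "nat \<Rightarrow> real" and M L1 G lnd lnC :: real
  assumes a0: "\<And>t. 1 \<le> t \<Longrightarrow> t \<le> T \<Longrightarrow> 0 \<le> a t"
    and aM: "\<And>t. 1 \<le> t \<Longrightarrow> t \<le> T \<Longrightarrow> a t \<le> M"
    and psi0: "\<And>t. 1 \<le> t \<Longrightarrow> t \<le> T \<Longrightarrow> 0 \<le> psi t"
    and psi1: "psi 1 \<le> lnd" and lp1: "lp 1 = - lnd"
    and stp: "\<And>t. 2 \<le> t \<Longrightarrow> t \<le> T \<Longrightarrow>
       a t * (- lp t) - a (t - 1) * (- lv t) \<le> min (a t) (a (t - 1)) * L1 + max (a t - a (t - 1)) 0 * G + (a t - a (t - 1)) * psi t"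
    and psiC: "\<And>t. 1 \<le> t \<Longrightarrow> t + 1 \<le> T \<Longrightarrow> psi (t + 1) \<le> psi t + lnC"
    and lnC: "0 \<le> lnC"
  shows "1 \<le> T \<Longrightarrow> (\<Sum>t=1..T. a t * (lv (t + 1) - lp t)) - (\<Sum>t=2..T. min (a t) (a (t - 1)) * L1 + max (a t - a (t - 1)) 0 * G)
     \<le> M * lnd + M * (real T - 1) * lnC - (M - a T) * psi T + a T * lv (T + 1)"
  using assms
proof (induction T)
  case 0
  then show ?case by simp
next
  case (Suc T)
  show ?case
  proof (cases "T = 0")
    case True
    have "(M - a 1) * psi 1 \<le> (M - a 1) * lnd"
      using Suc.prems True by (intro mult_left_mono) auto
    then show ?thesis using True Suc.prems by (simp add: algebra_simps)
  next
    case False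
    have IH: "(\<Sum>t=1..T. a t * (lv (t + 1) - lp t)) - (\<Sum>t=2..T. min (a t) (a (t - 1)) * L1 + max (a t - a (t - 1)) 0 * G)
     \<le> M * lnd + M * (real T - 1) * lnC - (M - a T) * psi T + a T * lv (T + 1)"
      using Suc.IH[OF _ Suc.prems(2-)] False by force
    have st: "a (Suc T) * (- lp (Suc T)) - a T * (- lv (Suc T)) \<le> min (a (Suc T)) (a T) * L1 + max (a (Suc T) - a T) 0 * G + (a (Suc T) - a T) * psi (Suc T)"
      using Suc.prems(7)[of "Suc T"] False by simp
    have pc: "psi (Suc T) \<le> psi T + lnC" using Suc.prems(8)[of T] False by simp
    have "(M - a T) * (psi (Suc T) - psi T) \<le> (M - a T) * lnC"
      using pc Suc.prems(2,3)[of T] False by (intro mult_left_mono) auto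
    also have "\<dots> \<le> M * lnC" using Suc.prems(2)[of T] False lnC by (intro mult_right_mono) auto
    finally have key: "(M - a T) * (psi (Suc T) - psi T) \<le> M * lnC" .
    have s1: "(\<Sum>t=1..Suc T. a t * (lv (t + 1) - lp t)) = (\<Sum>t=1..T. a t * (lv (t + 1) - lp t)) + a (Suc T) * (lv (Suc T + 1) - lp (Suc T))"
      by simp
    have s2: "(\<Sum>t=2..Suc T. min (a t) (a (t - 1)) * L1 + max (a t - a (t - 1)) 0 * G) = (\<Sum>t=2..T. min (a t) (a (t - 1)) * L1 + max (a t - a (t - 1)) 0 * G) + (min (a (Suc T)) (a T) * L1 + max (a (Suc T) - a T) 0 * G)"
      using False by simp
    show ?thesis unfolding s1 s2 using IH st key by (simp add: algebra_simps)
  qed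
qed



lemma gs_v_1: "gs_v d eta psi l 1 = uniform_vec d"
  by (simp add: gs_v_def)

lemma gs_p_1: "gs_p d eta psi l 1 = uniform_vec d"
  by (simp add: gs_p_def gs_pred_def)

lemma gs_v_Suc: "t \<ge> 1 \<Longrightarrow> j < d \<Longrightarrow> gs_v d eta psi l (Suc t) j =
   gs_p d eta psi l t j * exp (- eta * l t j) / (\<Sum>i<d. gs_p d eta psi l t i * exp (- eta * l t i))"
  by (cases t) (auto simp: gs_v_def gs_p_def Let_def)

lemma gs_p_ge2: "t \<ge> 2 \<Longrightarrow> gs_p d eta psi l t = psi t (gs_V d eta psi l t)"
  by (simp add: gs_p_def gs_pred_def gs_V_def)

lemma gs_V_col: "t \<ge> 1 \<Longrightarrow> j < d \<Longrightarrow> gs_V d eta psi l t t j = gs_v d eta psi l t j"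
  by (simp add: gs_V_def gs_v_def restrict_hist_def)

lemma D_TV_eq: "D_TV d x y = (\<Sum>i<d. max (x i - y i) 0)"
proof -
  have "{i. i < d \<and> x i \<ge> y i} = {i\<in>{..<d}. y i \<le> x i}" by auto
  hence "D_TV d x y = (\<Sum>i\<in>{i\<in>{..<d}. y i \<le> x i}. x i - y i)" by (simp add: D_TV_def)
  also have "\<dots> = (\<Sum>i<d. if y i \<le> x i then x i - y i else 0)" by (rule sum.inter_filter) simp
  also have "\<dots> = (\<Sum>i<d. max (x i - y i) 0)" by (intro sum.cong) auto
  finally show ?thesis .
qed



theorem theorem3:
  fixes d :: nat and eta alpha C :: real and T :: nat
    and W :: "nat \<Rightarrow> (nat \<Rightarrow> nat \<Rightarrow> real) \<Rightarrow> nat \<Rightarrow> real"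
    and l u :: "nat \<Rightarrow> nat \<Rightarrow> real"
  defines "psi \<equiv> share_mix d alpha W"
  assumes "d \<ge> 1" and "eta > 0" and "0 < alpha" and "alpha < 1" and "C \<ge> 1"
    and loss: "\<And>t j. t \<ge> 1 \<Longrightarrow> j < d \<Longrightarrow> 0 \<le> l t j \<and> l t j \<le> 1"
    and w_lower: "\<And>t j. t \<ge> 1 \<Longrightarrow> j < d \<Longrightarrow>
        gs_v d eta psi l t j \<le> W t (gs_V d eta psi l t) j"
    and w_upper: "\<And>t j. t \<ge> 1 \<Longrightarrow> j < d \<Longrightarrow> W t (gs_V d eta psi l t) j \<le> 1"
    and w_nonneg: "\<And>t j. t \<ge> 1 \<Longrightarrow> j < d \<Longrightarrow> 0 \<le> W t (gs_V d eta psi l t) j"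
    and w_slow: "\<And>t j. t \<ge> 1 \<Longrightarrow> j < d \<Longrightarrow>
        C * W (t + 1) (gs_V d eta psi l (t + 1)) j \<ge> W t (gs_V d eta psi l t) j"
    and "T \<ge> 1"
    and u_nonneg: "\<And>t j. 1 \<le> t \<Longrightarrow> t \<le> T \<Longrightarrow> j < d \<Longrightarrow> 0 \<le> u t j"
  shows "(\<Sum>t=1..T. norm1 d (u t) * (\<Sum>j<d. gs_p d eta psi l t j * l t j))
           - (\<Sum>t=1..T. \<Sum>j<d. u t j * l t j)
         \<le> n_max d T u * ln (real d) / eta
           + n_max d T u * real T * ln C / eta
           + eta / 8 * (\<Sum>t=1..T. norm1 d (u t))
           + m_shift d T u / eta
               * ln (Max ((\<lambda>t. \<Sum>i<d. W t (gs_V d eta psi l t) i) ` {1..T}) / alpha)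
           + ((\<Sum>t=2..T. norm1 d (u t)) - m_shift d T u) / eta * ln (1 / (1 - alpha))"
proof -
  define v where "v = gs_v d eta psi l"
  define p where "p = gs_p d eta psi l"
  define w where "w = (\<lambda>t. W t (gs_V d eta psi l t))"
  define Z where "Z = (\<lambda>t. \<Sum>i<d. w t i)"
  define Zm where "Zm = Max (Z ` {1..T})"
  define L1 where "L1 = ln (1 / (1 - alpha))"
  define G where "G = ln (Zm / alpha)"
  have dpos: "real d > 0" using assms(2) by simp
  have wl: "\<And>t j. t \<ge> 1 \<Longrightarrow> j < d \<Longrightarrow> v t j \<le> w t j" using w_lower unfolding v_def w_def by auto
  have wu: "\<And>t j. t \<ge> 1 \<Longrightarrow> j < d \<Longrightarrow> w t j \<le> 1" using w_upper unfolding w_def by auto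
  have ws: "\<And>t j. t \<ge> 1 \<Longrightarrow> j < d \<Longrightarrow> w t j \<le> C * w (t + 1) j" using w_slow unfolding w_def by auto
  have pt: "\<And>t j. t \<ge> 2 \<Longrightarrow> j < d \<Longrightarrow> p t j = (1 - alpha) * v t j + alpha * w t j / Z t"
    unfolding p_def v_def w_def Z_def
    by (simp add: gs_p_ge2 psi_def share_mix_def gs_V_col)
  have p1: "\<And>j. j < d \<Longrightarrow> p 1 j = 1 / real d" unfolding p_def by (simp add: gs_p_def gs_pred_def uniform_vec_def)
  have v1: "\<And>j. j < d \<Longrightarrow> v 1 j = 1 / real d" unfolding v_def by (simp add: gs_v_def uniform_vec_def)
  have vS: "\<And>t j. t \<ge> 1 \<Longrightarrow> j < d \<Longrightarrow> v (Suc t) j = p t j * exp (- eta * l t j) / (\<Sum>i<d. p t i * exp (- eta * l t i))"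
    unfolding v_def p_def by (rule gs_v_Suc)
  have Zge: "\<And>t. t \<ge> 1 \<Longrightarrow> (\<Sum>j<d. v t j) = 1 \<Longrightarrow> 1 \<le> Z t"
  proof -
    fix t :: nat assume "t \<ge> 1" "(\<Sum>j<d. v t j) = 1"
    moreover have "(\<Sum>j<d. v t j) \<le> Z t" unfolding Z_def using wl \<open>t \<ge> 1\<close> by (intro sum_mono) auto
    ultimately show "1 \<le> Z t" by simp
  qed
  have ppos: "\<And>t. t \<ge> 1 \<Longrightarrow> (\<forall>j<d. 0 < v t j) \<Longrightarrow> (\<Sum>j<d. v t j) = 1 \<Longrightarrow>
      (\<forall>j<d. 0 < p t j) \<and> (\<Sum>j<d. p t j) = 1"
  proof -
    fix t :: nat assume t1: "t \<ge> 1" and vp: "\<forall>j<d. 0 < v t j" and vs: "(\<Sum>j<d. v t j) = 1"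
    show "(\<forall>j<d. 0 < p t j) \<and> (\<Sum>j<d. p t j) = 1"
    proof (cases "t = 1")
      case True
      then show ?thesis using p1 dpos by simp
    next
      case False
      hence t2: "t \<ge> 2" using t1 by simp
      have Z1: "1 \<le> Z t" using Zge t1 vs by simp
      have "\<forall>j<d. 0 < p t j"
      proof (intro allI impI)
        fix j assume j: "j < d"
        have "0 < (1 - alpha) * v t j" using vp j assms(5) by simp
        moreover have "0 \<le> alpha * w t j / Z t" using Z1 assms(4) w_nonneg[of t j] t1 j unfolding w_def
          by (intro divide_nonneg_pos mult_nonneg_nonneg) auto
        ultimately show "0 < p t j" using pt[OF t2 j] by simp
      qed
      moreover have "(\<Sum>j<d. p t j) = (1 - alpha) * (\<Sum>j<d. v t j) + alpha * (\<Sum>j<d. w t j) / Z t"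
        using pt[OF t2] by (simp add: sum.distrib sum_distrib_left sum_divide_distrib)
      hence "(\<Sum>j<d. p t j) = 1" using vs Z1 unfolding Z_def by simp
      ultimately show ?thesis by simp
    qed
  qed
  have vpos: "\<And>t. t \<ge> 1 \<Longrightarrow> (\<forall>j<d. 0 < v t j) \<and> (\<Sum>j<d. v t j) = 1"
  proof -
    fix t :: nat assume "t \<ge> 1"
    then show "(\<forall>j<d. 0 < v t j) \<and> (\<Sum>j<d. v t j) = 1"
    proof (induction t rule: dec_induct)
      case base
      then show ?case using v1 dpos by simp
    next
      case (step t)
      have pp: "\<forall>j<d. 0 < p t j" using ppos step by auto
      define S where "S = (\<Sum>i<d. p t i * exp (- eta * l t i))"
      have Spos: "0 < S" unfolding S_def using pp assms(2) by (intro sum_pos) (auto simp: lessThan_empty_iff)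
      have "\<forall>j<d. 0 < v (Suc t) j" using vS[OF step(1)] pp Spos unfolding S_def by simp
      moreover have "(\<Sum>j<d. v (Suc t) j) = (\<Sum>j<d. p t j * exp (- eta * l t j) / S)"
        using vS[OF step(1)] unfolding S_def by (intro sum.cong) auto
      moreover have "(\<Sum>j<d. p t j * exp (- eta * l t j) / S) = S / S"
        unfolding S_def by (rule sum_divide_distrib[symmetric])
      ultimately show ?case using Spos by simp
    qed
  qed
  have vp: "\<And>t j. t \<ge> 1 \<Longrightarrow> j < d \<Longrightarrow> 0 < v t j" using vpos by auto
  have pp: "\<And>t j. t \<ge> 1 \<Longrightarrow> j < d \<Longrightarrow> 0 < p t j" using vpos ppos by blast
  have psum: "\<And>t. t \<ge> 1 \<Longrightarrow> (\<Sum>j<d. p t j) = 1" using vpos ppos by blast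
  have Z1: "\<And>t. t \<ge> 1 \<Longrightarrow> 1 \<le> Z t" using vpos Zge by blast
  have v_le1: "\<And>t j. t \<ge> 1 \<Longrightarrow> j < d \<Longrightarrow> v t j \<le> 1"
  proof -
    fix t j :: nat assume "t \<ge> 1" "j < d"
    have "v t j \<le> (\<Sum>i<d. v t i)" using vp \<open>t \<ge> 1\<close> \<open>j < d\<close>
      by (intro member_le_sum) (auto intro: less_imp_le)
    thus "v t j \<le> 1" using vpos \<open>t \<ge> 1\<close> by simp
  qed
  have wp: "\<And>t j. t \<ge> 1 \<Longrightarrow> j < d \<Longrightarrow> 0 < w t j" using vp wl by (meson less_le_trans)
  have ZZm: "\<And>t. 1 \<le> t \<Longrightarrow> t \<le> T \<Longrightarrow> Z t \<le> Zm" unfolding Zm_def by (intro Max_ge) auto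
  have round: "\<And>t k. t \<ge> 1 \<Longrightarrow> k < d \<Longrightarrow>
      (\<Sum>j<d. p t j * l t j) - l t k \<le> (ln (v (t + 1) k) - ln (p t k)) / eta + eta / 8"
  proof -
    fix t k :: nat assume t1: "t \<ge> 1" and k: "k < d"
    define S where "S = (\<Sum>i<d. p t i * exp (- eta * l t i))"
    define q where "q = (\<Sum>j<d. p t j * l t j)"
    have Spos: "0 < S" unfolding S_def using pp t1 assms(2) by (intro sum_pos) (auto simp: lessThan_empty_iff)
    have hf: "ln S \<le> - eta * q + eta\<^sup>2 / 8" unfolding S_def q_def
      using finite_hoeffding[of eta d "p t" "l t"] assms(3) pp t1 psum loss
      by (simp add: less_imp_le)
    have "ln (v (t + 1) k) = ln (p t k) + (- eta * l t k) - ln S"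
      using vS[OF t1 k] pp[OF t1 k] Spos unfolding S_def by (simp add: ln_div ln_mult)
    hence "eta * (q - l t k) \<le> (ln (v (t + 1) k) - ln (p t k)) + eta\<^sup>2 / 8"
      using hf by (simp add: algebra_simps)
    hence "q - l t k \<le> ((ln (v (t + 1) k) - ln (p t k)) + eta\<^sup>2 / 8) / eta"
      using assms(3) by (simp add: pos_le_divide_eq mult.commute)
    also have "\<dots> = (ln (v (t + 1) k) - ln (p t k)) / eta + eta / 8"
      using assms(3) by (simp add: field_simps power2_eq_square)
    finally show "(\<Sum>j<d. p t j * l t j) - l t k \<le> (ln (v (t + 1) k) - ln (p t k)) / eta + eta / 8"
      unfolding q_def .
  qed
  define R where "R = (\<lambda>t. \<Sum>k<d. u t k * (ln (v (t + 1) k) - ln (p t k)))"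
  define N where "N = (\<lambda>t. norm1 d (u t))"
  have Neq: "\<And>t. 1 \<le> t \<Longrightarrow> t \<le> T \<Longrightarrow> N t = (\<Sum>k<d. u t k)"
    unfolding N_def norm1_def using u_nonneg by (intro sum.cong) auto
  have round2: "\<And>t. t \<in> {1..T} \<Longrightarrow> N t * (\<Sum>j<d. p t j * l t j) - (\<Sum>k<d. u t k * l t k)
      \<le> R t / eta + eta / 8 * N t"
  proof -
    fix t assume t: "t \<in> {1..T}"
    have "N t * (\<Sum>j<d. p t j * l t j) - (\<Sum>k<d. u t k * l t k)
        = (\<Sum>k<d. u t k * ((\<Sum>j<d. p t j * l t j) - l t k))"
      using Neq t by (simp add: sum_distrib_right sum_subtractf algebra_simps)
    also have "\<dots> \<le> (\<Sum>k<d. u t k * ((ln (v (t + 1) k) - ln (p t k)) / eta + eta / 8))"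
      using t round u_nonneg by (intro sum_mono mult_left_mono) auto
    also have "\<dots> = R t / eta + eta / 8 * N t"
      using Neq t unfolding R_def
      by (simp add: sum.distrib sum_distrib_left sum_distrib_right sum_divide_distrib algebra_simps)
    finally show "N t * (\<Sum>j<d. p t j * l t j) - (\<Sum>k<d. u t k * l t k) \<le> R t / eta + eta / 8 * N t" .
  qed
  have total1: "(\<Sum>t=1..T. N t * (\<Sum>j<d. p t j * l t j)) - (\<Sum>t=1..T. \<Sum>k<d. u t k * l t k)
      \<le> (\<Sum>t=1..T. R t) / eta + eta / 8 * (\<Sum>t=1..T. N t)"
  proof -
    have "(\<Sum>t=1..T. N t * (\<Sum>j<d. p t j * l t j)) - (\<Sum>t=1..T. \<Sum>k<d. u t k * l t k)
       = (\<Sum>t=1..T. N t * (\<Sum>j<d. p t j * l t j) - (\<Sum>k<d. u t k * l t k))"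
      by (simp add: sum_subtractf)
    also have "\<dots> \<le> (\<Sum>t=1..T. R t / eta + eta / 8 * N t)"
      using round2 by (intro sum_mono) auto
    also have "\<dots> = (\<Sum>t=1..T. R t) / eta + eta / 8 * (\<Sum>t=1..T. N t)"
      by (simp add: sum.distrib sum_divide_distrib sum_distrib_left)
    finally show ?thesis .
  qed
  define Mk where "Mk = (\<lambda>k. Max ((\<lambda>t. u t k) ` {1..T}))"
  have perk: "\<And>k. k < d \<Longrightarrow> (\<Sum>t=1..T. u t k * (ln (v (t + 1) k) - ln (p t k)))
     \<le> Mk k * ln (real d) + Mk k * real T * ln C
       + (\<Sum>t=2..T. min (u t k) (u (t - 1) k) * L1 + max (u t k - u (t - 1) k) 0 * G)"
  proof -
    fix k assume k: "k < d"
    have Mge: "\<And>t. 1 \<le> t \<Longrightarrow> t \<le> T \<Longrightarrow> u t k \<le> Mk k" unfolding Mk_def by (intro Max_ge) auto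
    have M0: "0 \<le> Mk k" using Mge[of 1] u_nonneg[of 1 k] k assms(12) by simp
    have lnd: "ln (1 / real d) = - ln (real d)" using dpos by (simp add: ln_div)
    have psi1: "- ln (w 1 k) \<le> ln (real d)"
    proof -
      have "1 / real d \<le> w 1 k" using v1[OF k] wl[of 1 k] k by simp
      hence "ln (1 / real d) \<le> ln (w 1 k)" using dpos by (intro ln_mono) auto
      thus ?thesis using lnd by simp
    qed
    have lp1: "ln (p 1 k) = - ln (real d)" using p1[OF k] lnd by simp
    have stp: "\<And>t. 2 \<le> t \<Longrightarrow> t \<le> T \<Longrightarrow>
       u t k * (- ln (p t k)) - u (t - 1) k * (- ln (v t k)) \<le> min (u t k) (u (t - 1) k) * L1
         + max (u t k - u (t - 1) k) 0 * G + (u t k - u (t - 1) k) * (- ln (w t k))"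
    proof -
      fix t :: nat assume t2: "2 \<le> t" and tT: "t \<le> T"
      have t1: "t \<ge> 1" using t2 by simp
      have vt: "0 < v t k" using vp[OF t1 k] .
      have wt: "0 < w t k" using wp[OF t1 k] .
      have pt': "0 < p t k" using pp[OF t1 k] .
      have Zt: "1 \<le> Z t" using Z1[OF t1] .
      have Zmt: "Z t \<le> Zm" using ZZm[OF t1 tT] .
      have h1: "- ln (p t k) \<le> L1 + - ln (v t k)"
      proof -
        have "(1 - alpha) * v t k \<le> p t k" using pt[OF t2 k] Zt assms(4) wt
          by (simp add: less_imp_le)
        hence "ln ((1 - alpha) * v t k) \<le> ln (p t k)" using vt assms(5) by (intro ln_mono) auto
        moreover have "ln ((1 - alpha) * v t k) = ln (1 - alpha) + ln (v t k)" using vt assms(5) by (simp add: ln_mult)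
        moreover have "L1 = - ln (1 - alpha)" unfolding L1_def using assms(5) by (simp add: ln_div)
        ultimately show ?thesis by simp
      qed
      have h2: "- ln (p t k) \<le> G + - ln (w t k)"
      proof -
        have "alpha * w t k / Zm \<le> alpha * w t k / Z t"
          using Zt Zmt wt assms(4) by (intro divide_left_mono) auto
        also have "\<dots> \<le> p t k" using pt[OF t2 k] vt assms(5) by simp
        finally have "ln (alpha * w t k / Zm) \<le> ln (p t k)" using Zt Zmt wt assms(4) by (intro ln_mono) auto
        moreover have "ln (alpha * w t k / Zm) = ln alpha + ln (w t k) - ln Zm"
          using Zt Zmt wt assms(4) by (simp add: ln_mult ln_div)
        moreover have "G = ln Zm - ln alpha" unfolding G_def using Zt Zmt assms(4) by (simp add: ln_div)
        ultimately show ?thesis by simp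
      qed
      have h3: "- ln (w t k) \<le> - ln (v t k)" using wl[OF t1 k] vt by simp
      show "u t k * (- ln (p t k)) - u (t - 1) k * (- ln (v t k)) \<le> min (u t k) (u (t - 1) k) * L1
         + max (u t k - u (t - 1) k) 0 * G + (u t k - u (t - 1) k) * (- ln (w t k))"
        by (rule step_ineq[OF _ _ h1 h2 h3]) (use u_nonneg t2 tT k in auto)
    qed
    have psiC: "\<And>t. 1 \<le> t \<Longrightarrow> t + 1 \<le> T \<Longrightarrow> - ln (w (t + 1) k) \<le> - ln (w t k) + ln C"
    proof -
      fix t :: nat assume t1: "1 \<le> t" and "t + 1 \<le> T"
      have "ln (w t k) \<le> ln (C * w (t + 1) k)" using ws[OF t1 k] wp[OF t1 k] by (intro ln_mono) auto
      also have "\<dots> = ln C + ln (w (t + 1) k)" using wp[of "t+1" k] k assms(6) by (simp add: ln_mult)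
      finally show "- ln (w (t + 1) k) \<le> - ln (w t k) + ln C" by simp
    qed
    have psi0: "\<And>t. 1 \<le> t \<Longrightarrow> t \<le> T \<Longrightarrow> 0 \<le> - ln (w t k)"
      using wu wp k by simp
    have lnC: "0 \<le> ln C" using assms(6) by simp
    have tg: "(\<Sum>t=1..T. u t k * (ln (v (t + 1) k) - ln (p t k))) - (\<Sum>t=2..T. min (u t k) (u (t - 1) k) * L1 + max (u t k - u (t - 1) k) 0 * G)
     \<le> Mk k * ln (real d) + Mk k * (real T - 1) * ln C - (Mk k - u T k) * (- ln (w T k)) + u T k * ln (v (T + 1) k)"
      by (rule telescope_generic[where a="\<lambda>t. u t k" and psi="\<lambda>t. - ln (w t k)" and lp="\<lambda>t. ln (p t k)"
            and lv="\<lambda>t. ln (v t k)"]) (use u_nonneg k Mge psi0 psi1 lp1 stp psiC lnC assms(12) in auto)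
    have e1: "0 \<le> (Mk k - u T k) * (- ln (w T k))"
      using Mge[of T] assms(12) psi0[of T] by (intro mult_nonneg_nonneg) auto
    have e2: "u T k * ln (v (T + 1) k) \<le> 0"
      using u_nonneg[of T k] k assms(12) v_le1[of "T+1" k] vp[of "T+1" k]
      by (simp add: mult_nonneg_nonpos)
    have e3: "Mk k * (real T - 1) * ln C \<le> Mk k * real T * ln C"
      using M0 lnC by (simp add: mult_left_mono mult_right_mono algebra_simps)
    show "(\<Sum>t=1..T. u t k * (ln (v (t + 1) k) - ln (p t k)))
     \<le> Mk k * ln (real d) + Mk k * real T * ln C
       + (\<Sum>t=2..T. min (u t k) (u (t - 1) k) * L1 + max (u t k - u (t - 1) k) 0 * G)"
      using tg e1 e2 e3 by linarith
  qed
  have sumR: "(\<Sum>t=1..T. R t) = (\<Sum>k<d. \<Sum>t=1..T. u t k * (ln (v (t + 1) k) - ln (p t k)))"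
    unfolding R_def by (rule sum.swap)
  also have "\<dots> \<le> (\<Sum>k<d. Mk k * ln (real d) + Mk k * real T * ln C
       + (\<Sum>t=2..T. min (u t k) (u (t - 1) k) * L1 + max (u t k - u (t - 1) k) 0 * G))"
    using perk by (intro sum_mono) auto
  also have "\<dots> = n_max d T u * ln (real d) + n_max d T u * real T * ln C
       + L1 * (\<Sum>t=2..T. \<Sum>k<d. min (u t k) (u (t - 1) k)) + G * (\<Sum>t=2..T. \<Sum>k<d. max (u t k - u (t - 1) k) 0)"
    unfolding n_max_def Mk_def
    by (simp add: sum.distrib sum_distrib_right sum_distrib_left sum.swap[of _ "{2..T}" "{..<d}"] algebra_simps)
  finally have sumR_le: "(\<Sum>t=1..T. R t) \<le> n_max d T u * ln (real d) + n_max d T u * real T * ln C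
       + L1 * (\<Sum>t=2..T. \<Sum>k<d. min (u t k) (u (t - 1) k)) + G * (\<Sum>t=2..T. \<Sum>k<d. max (u t k - u (t - 1) k) 0)" .
  have B_eq: "(\<Sum>t=2..T. \<Sum>k<d. max (u t k - u (t - 1) k) 0) = m_shift d T u"
    unfolding m_shift_def D_TV_eq ..
  have A_eq: "(\<Sum>t=2..T. \<Sum>k<d. min (u t k) (u (t - 1) k)) = (\<Sum>t=2..T. N t) - m_shift d T u"
  proof -
    have "(\<Sum>t=2..T. \<Sum>k<d. min (u t k) (u (t - 1) k))
        = (\<Sum>t=2..T. (\<Sum>k<d. u t k) - (\<Sum>k<d. max (u t k - u (t - 1) k) 0))"
      by (intro sum.cong) (auto simp: sum_subtractf[symmetric] intro!: sum.cong)
    also have "\<dots> = (\<Sum>t=2..T. N t - (\<Sum>k<d. max (u t k - u (t - 1) k) 0))"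
      using Neq by (intro sum.cong) auto
    also have "\<dots> = (\<Sum>t=2..T. N t) - m_shift d T u"
      using B_eq by (simp add: sum_subtractf)
    finally show ?thesis .
  qed
  have main: "(\<Sum>t=1..T. N t * (\<Sum>j<d. p t j * l t j)) - (\<Sum>t=1..T. \<Sum>k<d. u t k * l t k)
      \<le> (n_max d T u * ln (real d) + n_max d T u * real T * ln C
       + L1 * ((\<Sum>t=2..T. N t) - m_shift d T u) + G * m_shift d T u) / eta + eta / 8 * (\<Sum>t=1..T. N t)"
  proof -
    have "(\<Sum>t=1..T. R t) / eta \<le> (n_max d T u * ln (real d) + n_max d T u * real T * ln C
       + L1 * ((\<Sum>t=2..T. N t) - m_shift d T u) + G * m_shift d T u) / eta"
      using sumR_le A_eq B_eq assms(3) by (intro divide_right_mono) auto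
    thus ?thesis using total1 by linarith
  qed
  have alg: "\<And>a b S m S' x y e :: real. e > 0 \<Longrightarrow> (a + b + x * (S - m) + y * m) / e + e / 8 * S'
     = a / e + b / e + e / 8 * S' + m / e * y + (S - m) / e * x"
    by (simp add: field_simps)
  show ?thesis
    using main alg[OF assms(3)] unfolding N_def p_def G_def L1_def Zm_def Z_def w_def
    by simp
qed


end
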